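(* Let $\Phi:\mathbf D\to\mathbf C$, $\Psi:\mathbf C\to\mathbf D$ be a deformation retract of finite-type based chain complexes $(\mathbf C,I)$, $(\mathbf D,I')$ of real inner product spaces, and fix $n$. Then the conditions (1) $\mathrm{Proj}_{\operatorname{Ker}\partial_{n+1}^\dagger}(\Phi\Psi s-s)=0$ for all $s\in\mathbf C_n$, and (2) $\mathrm{Proj}_{\operatorname{Ker}\partial_{n-1}}(\Psi^\dagger\Phi^\dagger s-s)=0$ for all $s\in\mathbf C_{n-1}$ hold if and only if the Morsification $\mathcal M$ associated to $(\Phi,\Psi)$ is $(n,n-1)$-free.
   Context: $\partial$ is the boundary of $\mathbf C$, $\dagger$ the adjoint with respect to the inner products, $\mathrm{Proj}_W$ orthogonal projection. Deformation retract: chain maps with $\Psi\Phi=\mathrm{id}_{\mathbf D}$ and $\Phi\Psi$ chain homotopic to $\mathrm{id}_{\mathbf C}$. Then $\mathbf C=\operatorname{Ker}\Psi\oplus\operatorname{Im}\Phi$ as chain complexes. Morsification: give the subcomplex $\operatorname{Ker}\Psi$ (boundary $\partial'$) the restricted inner product and choose in each degree, via singular value decompositions, orthonormal bases $\mathcal R_+(\partial'_m)$ of $\operatorname{Im}\partial_m'^\dagger$ and $\mathcal L_+(\partial'_m)$ of $\operatorname{Im}\partial'_m$ with a bijection $v\mapsto w$, $\partial'_mv=\sigma w$, $\sigma>0$, plus a basis of the kernel of its Laplacian; base $\mathbf C$ by these one-dimensional spans together with summands of $\operatorname{Im}\Phi$; the Morse matching $\mathcal M$ consists of the edges $v\to w$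 (pairing $v\in\mathbf C_m$ with $w\in\mathbf C_{m-1}$), and cells of $\operatorname{Im}\Phi$ are critical. $\mathcal M$ is $(n,n-1)$-free if it pairs no $n$-cell with an $(n-1)$-cell, i.e. $\mathcal R_+(\partial'_n)=\emptyset$. *)

theory Defs
  imports "HOL-Analysis.Analysis"
begin

text \<open>A finite-type chain complex of real inner product spaces, realised inside a
Euclidean space: degree m piece C m is a subspace, pieces of different degree are
mutually orthogonal (so the total space is their orthogonal direct sum), only finitely
many degrees are nonzero, and d m : C m \<rightarrow> C (m-1) is linear with d d = 0.\<close>

definition chain_cx :: "(int \<Rightarrow> 'a::euclidean_space set) \<Rightarrow> (int \<Rightarrow> 'a \<Rightarrow> 'a) \<Rightarrow> bool" where
  "chain_cx C d \<longleftrightarrow>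
     (\<forall>m. subspace (C m)) \<and>
     (\<forall>m k. m \<noteq> k \<longrightarrow> (\<forall>x\<in>C m. \<forall>y\<in>C k. x \<bullet> y = 0)) \<and>
     finite {m. C m \<noteq> {0}} \<and>
     (\<forall>m. linear (d m)) \<and>
     (\<forall>m. d m ` C m \<subseteq> C (m - 1)) \<and>
     (\<forall>m. \<forall>x\<in>C m. d (m - 1) (d m x) = 0)"

definition chain_map ::
  "(int \<Rightarrow> 'a::euclidean_space set) \<Rightarrow> (int \<Rightarrow> 'a \<Rightarrow> 'a) \<Rightarrow>
   (int \<Rightarrow> 'b::euclidean_space set) \<Rightarrow> (int \<Rightarrow> 'b \<Rightarrow> 'b) \<Rightarrow> (int \<Rightarrow> 'a \<Rightarrow> 'b) \<Rightarrow> bool" where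
  "chain_map C dC D dD f \<longleftrightarrow>
     (\<forall>m. linear (f m) \<and> f m ` C m \<subseteq> D m \<and>
          (\<forall>x\<in>C m. f (m - 1) (dC m x) = dD m (f m x)))"

definition deformation_retract ::
  "(int \<Rightarrow> 'a::euclidean_space set) \<Rightarrow> (int \<Rightarrow> 'a \<Rightarrow> 'a) \<Rightarrow>
   (int \<Rightarrow> 'b::euclidean_space set) \<Rightarrow> (int \<Rightarrow> 'b \<Rightarrow> 'b) \<Rightarrow>
   (int \<Rightarrow> 'b \<Rightarrow> 'a) \<Rightarrow> (int \<Rightarrow> 'a \<Rightarrow> 'b) \<Rightarrow> bool" where
  "deformation_retract C dC D dD Phi Psi \<longleftrightarrow>
     chain_cx C dC \<and> chain_cx D dD \<and>
     chain_map D dD C dC Phi \<and> chain_map C dC D dD Psi \<and>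
     (\<forall>m. \<forall>x\<in>D m. Psi m (Phi m x) = x) \<and>
     (\<exists>h. (\<forall>m. linear (h m) \<and> h m ` C m \<subseteq> C (m + 1)) \<and>
          (\<forall>m. \<forall>x\<in>C m. Phi m (Psi m x) - x = dC (m + 1) (h m x) + h (m - 1) (dC m x)))"

definition adjoint_on :: "'a::euclidean_space set \<Rightarrow> 'b::euclidean_space set \<Rightarrow> ('a \<Rightarrow> 'b) \<Rightarrow> 'b \<Rightarrow> 'a" where
  "adjoint_on A B f y = (SOME x. x \<in> A \<and> (\<forall>u\<in>A. f u \<bullet> y = u \<bullet> x))"

definition Proj :: "'a::euclidean_space set \<Rightarrow> 'a \<Rightarrow> 'a" where
  "Proj W x = closest_point W x"

definition ker_Psi :: "(int \<Rightarrow> 'a::euclidean_space set) \<Rightarrow> (int \<Rightarrow> 'a \<Rightarrow> 'b::euclidean_space) \<Rightarrow> int \<Rightarrow> 'a set" where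
  "ker_Psi C Psi m = {x \<in> C m. Psi m x = 0}"

text \<open>The span of R_+(\<partial>'_n) in the Morsification: Im \<partial>'_n^dagger, where
\<partial>'_n : Ker \<Psi>_n \<rightarrow> Ker \<Psi>_(n-1) with restricted inner products.\<close>
definition Rplus_span :: "(int \<Rightarrow> 'a::euclidean_space set) \<Rightarrow> (int \<Rightarrow> 'a \<Rightarrow> 'a) \<Rightarrow> (int \<Rightarrow> 'a \<Rightarrow> 'b::euclidean_space) \<Rightarrow> int \<Rightarrow> 'a set" where
  "Rplus_span C dC Psi n =
     adjoint_on (ker_Psi C Psi n) (ker_Psi C Psi (n - 1)) (dC n) ` ker_Psi C Psi (n - 1)"

text \<open>The Morsification is (n,n-1)-free iff R_+(\<partial>'_n) is empty, i.e. the
orthonormal basis of Im \<partial>'_n^dagger is empty, i.e. this image is the zero space.\<close>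
definition morsification_free :: "(int \<Rightarrow> 'a::euclidean_space set) \<Rightarrow> (int \<Rightarrow> 'a \<Rightarrow> 'a) \<Rightarrow> (int \<Rightarrow> 'a \<Rightarrow> 'b::euclidean_space) \<Rightarrow> int \<Rightarrow> bool" where
  "morsification_free C dC Psi n \<longleftrightarrow> Rplus_span C dC Psi n \<subseteq> {0}"

end

theory Submission
  imports Defs
begin

lemma adj_ex:
  fixes f :: "'a::euclidean_space \<Rightarrow> 'b::euclidean_space"
  assumes "subspace A" "linear f"
  shows "\<exists>x\<in>A. \<forall>u\<in>A. f u \<bullet> y = u \<bullet> x"
proof -
  obtain p q where p: "p \<in> span A" and q: "\<And>w. w \<in> span A \<Longrightarrow> orthogonal q w"
    and e: "adjoint f y = p + q"
    using orthogonal_subspace_decomp_exists[of A "adjoint f y"] by blast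
  have pA: "p \<in> A" using p assms(1) by (metis span_eq_iff)
  show ?thesis
  proof (intro bexI[OF _ pA] ballI)
    fix u assume u: "u \<in> A"
    have "q \<bullet> u = 0" using q[of u] u span_base by (auto simp: orthogonal_def)
    then have "u \<bullet> q = 0" by (simp add: inner_commute)
    then show "f u \<bullet> y = u \<bullet> p"
      using adjoint_works[OF assms(2), of u y] e by (simp add: inner_add_right)
  qed
qed

lemma adj_prop:
  fixes f :: "'a::euclidean_space \<Rightarrow> 'b::euclidean_space"
  assumes "subspace A" "linear f"
  shows "adjoint_on A B f y \<in> A \<and> (\<forall>u\<in>A. f u \<bullet> y = u \<bullet> adjoint_on A B f y)"
  unfolding adjoint_on_def
  by (rule someI_ex) (use adj_ex[OF assms, of y] in blast)

lemma adj_zero_iff: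
  fixes f :: "'a::euclidean_space \<Rightarrow> 'b::euclidean_space"
  assumes "subspace A" "linear f"
  shows "adjoint_on A B f y = 0 \<longleftrightarrow> (\<forall>u\<in>A. f u \<bullet> y = 0)"
proof
  assume "adjoint_on A B f y = 0" then show "\<forall>u\<in>A. f u \<bullet> y = 0"
    using adj_prop[OF assms, of B y] by simp
next
  assume h: "\<forall>u\<in>A. f u \<bullet> y = 0"
  have "adjoint_on A B f y \<bullet> adjoint_on A B f y = 0"
    using adj_prop[OF assms, of B y] h by metis
  then show "adjoint_on A B f y = 0" by simp
qed

lemma proj_zero:
  fixes W :: "'a::euclidean_space set"
  assumes "subspace W"
  shows "Proj W v = 0 \<longleftrightarrow> (\<forall>w\<in>W. v \<bullet> w = 0)"
proof
  have cv: "convex W" "closed W" using assms by (auto simp: subspace_imp_convex closed_subspace)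
  assume h: "Proj W v = 0"
  show "\<forall>w\<in>W. v \<bullet> w = 0"
  proof
    fix w assume w: "w \<in> W"
    have "-w \<in> W" using w assms by (simp add: subspace_neg)
    then have "v \<bullet> w \<le> 0" "v \<bullet> (-w) \<le> 0"
      using closest_point_dot[OF cv w, of v] closest_point_dot[OF cv \<open>-w \<in> W\<close>, of v] h
      by (auto simp: Proj_def)
    then show "v \<bullet> w = 0" by simp
  qed
next
  have cv: "convex W" "closed W" using assms by (auto simp: subspace_imp_convex closed_subspace)
  assume h: "\<forall>w\<in>W. v \<bullet> w = 0"
  have "\<forall>z\<in>W. dist v 0 \<le> dist v z"
  proof
    fix z assume "z \<in> W"
    then have "v \<bullet> z = 0" using h by blast
    then have "norm (v - z)^2 = norm v ^2 + norm z ^2"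
      by (simp add: power2_norm_eq_inner inner_diff_left inner_diff_right inner_commute)
    then have "norm v ^2 \<le> norm (v - z) ^2" by simp
    then have "norm v \<le> norm (v - z)"
      using power2_le_imp_le norm_ge_zero by blast
    then show "dist v 0 \<le> dist v z" by (simp add: dist_norm)
  qed
  then show "Proj W v = 0"
    using closest_point_unique[OF cv subspace_0[OF assms]] by (simp add: Proj_def)
qed


lemma subspace_ker_lin:
  assumes "linear f"
  shows "subspace {x. f x = 0}"
  using assms by (auto simp: subspace_def linear_0 linear_add linear_scale)

lemma subspace_ker_Psi:
  assumes "subspace (C m)" "linear (Psi m)"
  shows "subspace (ker_Psi C Psi m)"
proof -
  have e: "ker_Psi C Psi m = C m \<inter> {x. Psi m x = 0}" by (auto simp: ker_Psi_def)
  show ?thesis unfolding e by (intro subspace_inter assms(1) subspace_ker_lin assms(2))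
qed

theorem mainTheorem10:
  fixes C :: "int \<Rightarrow> 'a::euclidean_space set" and dC :: "int \<Rightarrow> 'a \<Rightarrow> 'a"
    and D :: "int \<Rightarrow> 'b::euclidean_space set" and dD :: "int \<Rightarrow> 'b \<Rightarrow> 'b"
    and Phi :: "int \<Rightarrow> 'b \<Rightarrow> 'a" and Psi :: "int \<Rightarrow> 'a \<Rightarrow> 'b" and n :: int
  assumes "deformation_retract C dC D dD Phi Psi"
  shows "((\<forall>s\<in>C n.
            Proj {w \<in> C n. adjoint_on (C (n + 1)) (C n) (dC (n + 1)) w = 0}
                 (Phi n (Psi n s) - s) = 0) \<and>
          (\<forall>s\<in>C (n - 1).
            Proj {w \<in> C (n - 1). dC (n - 1) w = 0}
                 (adjoint_on (C (n - 1)) (D (n - 1)) (Psi (n - 1))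
                    (adjoint_on (D (n - 1)) (C (n - 1)) (Phi (n - 1)) s) - s) = 0))
         \<longleftrightarrow> morsification_free C dC Psi n"
proof -
  have dr: "chain_cx C dC" "chain_cx D dD" "chain_map D dD C dC Phi" "chain_map C dC D dD Psi"
    "\<forall>m. \<forall>x\<in>D m. Psi m (Phi m x) = x"
    "\<exists>h. (\<forall>m. linear (h m) \<and> h m ` C m \<subseteq> C (m + 1)) \<and>
          (\<forall>m. \<forall>x\<in>C m. Phi m (Psi m x) - x = dC (m + 1) (h m x) + h (m - 1) (dC m x))"
    using assms unfolding deformation_retract_def by auto
  obtain h where hh: "\<forall>m. linear (h m) \<and> h m ` C m \<subseteq> C (m + 1)"
     "\<forall>m. \<forall>x\<in>C m. Phi m (Psi m x) - x = dC (m + 1) (h m x) + h (m - 1) (dC m x)"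
    using dr(6) by blast
  have subC: "\<And>m. subspace (C m)" using dr(1)[unfolded chain_cx_def, THEN conjunct1] by blast
  have subD: "\<And>m. subspace (D m)" using dr(2)[unfolded chain_cx_def, THEN conjunct1] by blast
  have linC: "\<And>m. linear (dC m)" using dr(1)[unfolded chain_cx_def, THEN conjunct2, THEN conjunct2, THEN conjunct2, THEN conjunct1] by blast
  have imC: "\<And>m. dC m ` C m \<subseteq> C (m - 1)" using dr(1)[unfolded chain_cx_def, THEN conjunct2, THEN conjunct2, THEN conjunct2, THEN conjunct2, THEN conjunct1] by blast
  have ddC: "\<And>m x. x \<in> C m \<Longrightarrow> dC (m - 1) (dC m x) = 0" using dr(1)[unfolded chain_cx_def, THEN conjunct2, THEN conjunct2, THEN conjunct2, THEN conjunct2, THEN conjunct2] by blast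
  have linD: "\<And>m. linear (dD m)" using dr(2)[unfolded chain_cx_def, THEN conjunct2, THEN conjunct2, THEN conjunct2, THEN conjunct1] by blast
  have linPhi: "\<And>m. linear (Phi m)" using dr(3) unfolding chain_map_def by blast
  have imPhi: "\<And>m. Phi m ` D m \<subseteq> C m" using dr(3) unfolding chain_map_def by blast
  have comPhi: "\<And>m x. x \<in> D m \<Longrightarrow> Phi (m - 1) (dD m x) = dC m (Phi m x)"
    using dr(3) unfolding chain_map_def by blast
  have linPsi: "\<And>m. linear (Psi m)" using dr(4) unfolding chain_map_def by blast
  have imPsi: "\<And>m. Psi m ` C m \<subseteq> D m" using dr(4) unfolding chain_map_def by blast
  have comPsi: "\<And>m x. x \<in> C m \<Longrightarrow> Psi (m - 1) (dC m x) = dD m (Psi m x)"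
    using dr(4) unfolding chain_map_def by blast
  have ret: "\<And>m x. x \<in> D m \<Longrightarrow> Psi m (Phi m x) = x" using dr(5) by blast
  have linh: "\<And>m. linear (h m)" using hh by blast
  have imh: "\<And>m. h m ` C m \<subseteq> C (m + 1)" using hh by blast
  have hom: "\<And>m x. x \<in> C m \<Longrightarrow> Phi m (Psi m x) - x = dC (m + 1) (h m x) + h (m - 1) (dC m x)"
    using hh by blast
  define K where "K = ker_Psi C Psi"
  have subK: "\<And>m. subspace (K m)" unfolding K_def using subspace_ker_Psi subC linPsi by blast
  have K_iff: "\<And>m x. x \<in> K m \<longleftrightarrow> x \<in> C m \<and> Psi m x = 0" by (simp add: K_def ker_Psi_def)
  have dCin: "\<And>m x. x \<in> C m \<Longrightarrow> dC m x \<in> C (m - 1)" using imC by blast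
  have Phiin: "\<And>m x. x \<in> D m \<Longrightarrow> Phi m x \<in> C m" using imPhi by blast
  have Psiin: "\<And>m x. x \<in> C m \<Longrightarrow> Psi m x \<in> D m" using imPsi by blast
  have hin: "\<And>m x. x \<in> C m \<Longrightarrow> h m x \<in> C (m + 1)" using imh by blast
  have PP0: "\<And>m x. Psi m x = 0 \<Longrightarrow> Phi m (Psi m x) = 0" using linPhi linear_0 by metis
  have kerpart: "\<And>m s. s \<in> C m \<Longrightarrow> s - Phi m (Psi m s) \<in> K m"
  proof -
    fix m s assume s: "s \<in> C m"
    have "Phi m (Psi m s) \<in> C m" using Phiin Psiin s by blast
    then have "s - Phi m (Psi m s) \<in> C m" using subC s subspace_diff by blast
    moreover have "Psi m (s - Phi m (Psi m s)) = 0"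
      using ret[OF Psiin[OF s]] linear_diff[OF linPsi] by simp
    ultimately show "s - Phi m (Psi m s) \<in> K m" using K_iff by blast
  qed
  define P where "P \<longleftrightarrow> (\<forall>u\<in>K n. dC n u = 0)"
  have A: "morsification_free C dC Psi n \<longleftrightarrow> P"
  proof -
    have "morsification_free C dC Psi n \<longleftrightarrow>
        (\<forall>y\<in>K (n - 1). adjoint_on (K n) (K (n - 1)) (dC n) y = 0)"
      unfolding morsification_free_def Rplus_span_def K_def by blast
    also have "\<dots> \<longleftrightarrow> (\<forall>y\<in>K (n - 1). \<forall>u\<in>K n. dC n u \<bullet> y = 0)"
      using adj_zero_iff[OF subK linC] by blast
    also have "\<dots> \<longleftrightarrow> P"
    proof
      assume H: "\<forall>y\<in>K (n - 1). \<forall>u\<in>K n. dC n u \<bullet> y = 0"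
      show P unfolding P_def
      proof
        fix u assume u: "u \<in> K n"
        have uC: "u \<in> C n" and uP: "Psi n u = 0" using u K_iff by auto
        have "Psi (n - 1) (dC n u) = 0" using comPsi[OF uC] uP linear_0[OF linD] by simp
        then have "dC n u \<in> K (n - 1)" using K_iff dCin[OF uC] by blast
        then have "dC n u \<bullet> dC n u = 0" using H u by blast
        then show "dC n u = 0" by simp
      qed
    qed (simp add: P_def)
    finally show ?thesis .
  qed
  define W where "W = {w \<in> C n. \<forall>v\<in>C (n + 1). dC (n + 1) v \<bullet> w = 0}"
  have Weq: "{w \<in> C n. adjoint_on (C (n + 1)) (C n) (dC (n + 1)) w = 0} = W"
    unfolding W_def using adj_zero_iff[OF subC linC] by blast
  have subW: "subspace W"
    unfolding W_def subspace_def
    using subC[of n] by (auto simp: subspace_def inner_add_right)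
  have B1: "(\<forall>s\<in>C n. Proj W (Phi n (Psi n s) - s) = 0) \<longleftrightarrow> P"
  proof
    assume H: "\<forall>s\<in>C n. Proj W (Phi n (Psi n s) - s) = 0"
    show P unfolding P_def
    proof
      fix u assume u: "u \<in> K n"
      then have uC: "u \<in> C n" and uP: "Psi n u = 0" using K_iff by auto
      have "Phi n (Psi n u) - u = - u" using PP0[OF uP] by simp
      then have uW: "\<forall>w\<in>W. (- u) \<bullet> w = 0" using H uC proj_zero[OF subW] by metis
      define B where "B = dC (n + 1) ` C (n + 1)"
      have subB: "subspace B" unfolding B_def using linear_subspace_image[OF linC subC] .
      have BC: "B \<subseteq> C n" unfolding B_def using imC[of "n+1"] by simp
      obtain b c where b: "b \<in> span B" and c: "\<And>w. w \<in> span B \<Longrightarrow> orthogonal c w"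
        and e: "u = b + c"
        using orthogonal_subspace_decomp_exists[of B u] by blast
      have bB: "b \<in> B" using b subB by (metis span_eq_iff)
      have cC: "c \<in> C n" using e uC bB BC subC[of n]
        by (metis add_diff_cancel_left' subsetD subspace_diff)
      have cW: "c \<in> W" unfolding W_def
      proof (intro CollectI conjI ballI cC)
        fix v assume "v \<in> C (n + 1)"
        then have "dC (n + 1) v \<in> span B" unfolding B_def by (simp add: span_base)
        then have "orthogonal c (dC (n + 1) v)" using c by blast
        then show "dC (n + 1) v \<bullet> c = 0" by (metis orthogonal_def inner_commute)
      qed
      have "u \<bullet> c = 0" using uW cW by simp
      moreover have "b \<bullet> c = 0" using c[OF span_base[OF bB]] by (simp add: orthogonal_def inner_commute)
      ultimately have "c \<bullet> c = 0" using e by (simp add: inner_add_left)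
      then have "u = b" using e by simp
      then obtain v where v: "v \<in> C (n + 1)" "u = dC (n + 1) v" using bB B_def by blast
      show "dC n u = 0" using ddC[OF v(1)] v(2) by simp
    qed
  next
    assume HP: P
    show "\<forall>s\<in>C n. Proj W (Phi n (Psi n s) - s) = 0"
    proof
      fix s assume s: "s \<in> C n"
      define v' where "v' = s - Phi n (Psi n s)"
      have v'K: "v' \<in> K n" using kerpart[OF s] v'_def by simp
      then have v'C: "v' \<in> C n" and v'P: "Psi n v' = 0" using K_iff by auto
      have dv: "dC n v' = 0" using HP v'K P_def by blast
      have "Phi n (Psi n v') - v' = dC (n + 1) (h n v')"
        using hom[OF v'C] dv linear_0[OF linh] by simp
      then have eq: "Phi n (Psi n s) - s = dC (n + 1) (h n v')"
        using PP0[OF v'P] v'_def by simp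
      have hv: "h n v' \<in> C (n + 1)" using hin[OF v'C] .
      show "Proj W (Phi n (Psi n s) - s) = 0"
        unfolding proj_zero[OF subW] eq using hv W_def by blast
    qed
  qed
  define Z where "Z = {w \<in> C (n - 1). dC (n - 1) w = 0}"
  have subZ: "subspace Z" unfolding Z_def
  proof -
    have e: "{w \<in> C (n - 1). dC (n - 1) w = 0} = C (n - 1) \<inter> {w. dC (n - 1) w = 0}" by auto
    show "subspace {w \<in> C (n - 1). dC (n - 1) w = 0}"
      unfolding e by (intro subspace_inter subC subspace_ker_lin linC)
  qed
  have C2: "P \<Longrightarrow> (\<forall>s\<in>C (n - 1).
            Proj Z (adjoint_on (C (n - 1)) (D (n - 1)) (Psi (n - 1))
                    (adjoint_on (D (n - 1)) (C (n - 1)) (Phi (n - 1)) s) - s) = 0)"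
  proof
    fix s assume HP: P and s: "s \<in> C (n - 1)"
    define y where "y = adjoint_on (D (n - 1)) (C (n - 1)) (Phi (n - 1)) s"
    define x where "x = adjoint_on (C (n - 1)) (D (n - 1)) (Psi (n - 1)) y"
    have y: "\<forall>d\<in>D (n - 1). Phi (n - 1) d \<bullet> s = d \<bullet> y"
      using adj_prop[OF subD linPhi] y_def by blast
    have x: "\<forall>u\<in>C (n - 1). Psi (n - 1) u \<bullet> y = u \<bullet> x"
      using adj_prop[OF subC linPsi] x_def by blast
    have fix_z: "Phi (n - 1) (Psi (n - 1) z) = z" if z: "z \<in> Z" for z
    proof -
      have zC: "z \<in> C (n - 1)" and dz: "dC (n - 1) z = 0" using z Z_def by auto
      define k where "k = z - Phi (n - 1) (Psi (n - 1) z)"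
      have kK: "k \<in> K (n - 1)" using kerpart[OF zC] k_def by simp
      then have kC: "k \<in> C (n - 1)" and kP: "Psi (n - 1) k = 0" using K_iff by auto
      have "dC (n - 1) (Phi (n - 1) (Psi (n - 1) z)) = Phi (n - 1 - 1) (dD (n - 1) (Psi (n - 1) z))"
        using comPhi[OF Psiin[OF zC]] by simp
      also have "\<dots> = Phi (n - 1 - 1) (Psi (n - 1 - 1) (dC (n - 1) z))"
        using comPsi[OF zC] by simp
      also have "\<dots> = 0" using dz linear_0[OF linPsi] linear_0[OF linPhi] by simp
      finally have dk: "dC (n - 1) k = 0" using k_def dz linear_diff[OF linC] by simp
      have "Phi (n - 1) (Psi (n - 1) k) - k = dC n (h (n - 1) k)"
        using hom[OF kC] dk linear_0[OF linh] by simp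
      then have mk: "- k = dC n (h (n - 1) k)" using PP0[OF kP] by simp
      define g where "g = h (n - 1) k"
      have gC: "g \<in> C n" using hin[OF kC] g_def by simp
      define g' where "g' = g - Phi n (Psi n g)"
      have g'K: "g' \<in> K n" using kerpart[OF gC] g'_def by simp
      have "dC n (Phi n (Psi n g)) = Phi (n - 1) (dD n (Psi n g))"
        using comPhi[OF Psiin[OF gC]] by simp
      also have "\<dots> = Phi (n - 1) (Psi (n - 1) (dC n g))"
        using comPsi[OF gC] by simp
      also have "\<dots> = Phi (n - 1) (Psi (n - 1) (- k))" using mk g_def by simp
      also have "\<dots> = 0" using kP linear_neg[OF linPsi] linear_0[OF linPhi] by simp
      finally have "dC n g' = - k" using g'_def mk g_def linear_diff[OF linC] by simp
      moreover have "dC n g' = 0" using HP g'K P_def by blast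
      ultimately have "k = 0" by simp
      then show ?thesis using k_def by simp
    qed
    show "Proj Z (x - s) = 0"
      unfolding proj_zero[OF subZ]
    proof
      fix z assume z: "z \<in> Z"
      have zC: "z \<in> C (n - 1)" using z Z_def by auto
      have "z \<bullet> x = Psi (n - 1) z \<bullet> y" using x zC by simp
      also have "\<dots> = Phi (n - 1) (Psi (n - 1) z) \<bullet> s" using y Psiin[OF zC] by simp
      also have "\<dots> = z \<bullet> s" using fix_z[OF z] by simp
      finally show "(x - s) \<bullet> z = 0" by (simp add: inner_diff_left inner_commute[of x z] inner_commute[of s z])
    qed
  qed
  show ?thesis
    unfolding Weq A using B1 C2 Z_def by blast
qed

end
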